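(* Let $W_1,W_2,\dots$ be graphons on $\Omega$ with $\|W_n-W\|_\square\to0$ for a graphon $W$. For each $n$ let $f_n:\Omega\to\{0,\tfrac12,1\}$ be a half-integral fractional vertex cover of $W_n$. Then there exists a half-integral fractional vertex cover $f:\Omega\to\{0,\tfrac12,1\}$ of $W$ such that (a) $\mu(f^{-1}(0))\ge\liminf_{n\to\infty}\mu(f_n^{-1}(0))$, and (b) $\|f\|_1\le\liminf_{n\to\infty}\|f_n\|_1$.
   Context: $(\Omega,\mu)$ is an atomless standard probability space; a graphon is a symmetric measurable $W:\Omega^2\to[0,1]$. The cut norm is $\|U\|_\square=\sup_{S,T\subseteq\Omega}\left|\int_{S\times T}U\,d\mu^2\right|$ over measurable $S,T$. A fractional vertex cover of a graphon $W$ is a measurable $f:\Omega\to[0,1]$ such that for $\mu^2$-almost every $(x,y)$ with $W(x,y)>0$ we have $f(x)+f(y)\ge1$; it is half-integral if its values lie in $\{0,\tfrac12,1\}$. $\|f\|_1=\int_\Omega|f|\,d\mu$. *)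

theory Defs
  imports "HOL-Probability.Probability"
begin

definition atomless_measure :: "'a measure \<Rightarrow> bool" where
  "atomless_measure M \<longleftrightarrow>
     (\<forall>A\<in>sets M. 0 < emeasure M A \<longrightarrow>
        (\<exists>B\<in>sets M. B \<subseteq> A \<and> 0 < emeasure M B \<and> emeasure M B < emeasure M A))"

definition atomless_standard_prob_space :: "'a::polish_space measure \<Rightarrow> bool" where
  "atomless_standard_prob_space M \<longleftrightarrow>
     prob_space M \<and> sets M = sets borel \<and> atomless_measure M"

definition graphon :: "'a measure \<Rightarrow> ('a \<Rightarrow> 'a \<Rightarrow> real) \<Rightarrow> bool" where
  "graphon M W \<longleftrightarrow>
     (\<lambda>(x, y). W x y) \<in> borel_measurable (M \<Otimes>\<^sub>M M) \<and>
     (\<forall>x y. W x y = W y x) \<and> (\<forall>x y. 0 \<le> W x y \<and> W x y \<le> 1)"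

definition cut_norm :: "'a measure \<Rightarrow> ('a \<Rightarrow> 'a \<Rightarrow> real) \<Rightarrow> real" where
  "cut_norm M U =
     (SUP ST \<in> sets M \<times> sets M.
        \<bar>LINT p : fst ST \<times> snd ST | M \<Otimes>\<^sub>M M. U (fst p) (snd p)\<bar>)"

definition fractional_vertex_cover :: "'a measure \<Rightarrow> ('a \<Rightarrow> 'a \<Rightarrow> real) \<Rightarrow> ('a \<Rightarrow> real) \<Rightarrow> bool" where
  "fractional_vertex_cover M W f \<longleftrightarrow>
     f \<in> borel_measurable M \<and> (\<forall>x\<in>space M. 0 \<le> f x \<and> f x \<le> 1) \<and>
     (AE p in M \<Otimes>\<^sub>M M. W (fst p) (snd p) > 0 \<longrightarrow> f (fst p) + f (snd p) \<ge> 1)"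

definition half_integral :: "'a measure \<Rightarrow> ('a \<Rightarrow> real) \<Rightarrow> bool" where
  "half_integral M f \<longleftrightarrow> (\<forall>x\<in>space M. f x \<in> {0, 1/2, 1})"

definition L1_norm :: "'a measure \<Rightarrow> ('a \<Rightarrow> real) \<Rightarrow> real" where
  "L1_norm M f = (\<integral>x. \<bar>f x\<bar> \<partial>M)"

end

theory Submission
  imports Defs "HOL-Library.Diagonal_Subsequence"
begin



lemma tannery_meas:
  assumes fin: "finite_measure D" and disj: "disjoint_family A" and A: "range A \<subseteq> sets D"
    and R: "\<And>n. R n \<in> sets D"
    and lim: "\<And>k. (\<lambda>n. measure D (R n \<inter> A k)) \<longlonglongrightarrow> b k"
  shows "(\<lambda>n. measure D (R n \<inter> (\<Union>k. A k))) \<longlonglongrightarrow> suminf b"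
proof -
  interpret finite_measure D by fact
  have eq: "measure D (R n \<inter> (\<Union>k. A k)) = (\<Sum>k. measure D (R n \<inter> A k))" for n
  proof -
    have "(\<lambda>k. measure D (R n \<inter> A k)) sums measure D (\<Union>k. R n \<inter> A k)"
      proof (rule finite_measure_UNION)
      show "disjoint_family (\<lambda>k. R n \<inter> A k)"
        using disj unfolding disjoint_family_on_def by blast
    qed (use A R in auto)
    then show ?thesis by (simp add: sums_iff)
  qed
  have sm: "summable (\<lambda>k. measure D (A k))"
    using finite_measure_UNION[OF A disj] by (simp add: sums_iff)
  have "((\<lambda>n. \<Sum>k. measure D (R n \<inter> A k)) \<longlonglongrightarrow> suminf b)"
  proof (rule tannerys_theorem[THEN conjunct2, THEN conjunct2])
    show "\<And>k. (\<lambda>n. measure D (R n \<inter> A k)) \<longlonglongrightarrow> b k" by (rule lim)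
    show "\<forall>\<^sub>F (k, n) in at_top \<times>\<^sub>F sequentially. norm (measure D (R n \<inter> A k)) \<le> measure D (A k)"
      by (rule always_eventually) (use A in \<open>auto intro!: finite_measure_mono\<close>)
  qed (use sm in auto)
  then show ?thesis by (simp add: eq)
qed


lemma dyn_conv:
  assumes fin: "finite_measure D" and sG: "sets D = sigma_sets (space D) G"
    and IG: "Int_stable G" and GP: "G \<subseteq> Pow (space D)"
    and R: "\<And>n. R n \<in> sets D"
    and conv: "\<And>A. A \<in> G \<Longrightarrow> convergent (\<lambda>n. measure D (R n \<inter> A))"
    and convS: "convergent (\<lambda>n. measure D (R n))"
    and A: "A \<in> sets D"
  shows "convergent (\<lambda>n. measure D (R n \<inter> A))"
proof -
  interpret finite_measure D by fact
  from A have "A \<in> sigma_sets (space D) G" using sG by simp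
  with IG GP show ?thesis
  proof (induct rule: sigma_sets_induct_disjoint)
    case (basic A) then show ?case by (rule conv)
  next
    case empty then show ?case by (simp add: convergent_const)
  next
    case (compl A)
    have As: "A \<in> sets D" using compl(1) sG by simp
    have "measure D (R n \<inter> (space D - A)) = measure D (R n) - measure D (R n \<inter> A)" for n
    proof -
      have "R n \<inter> (space D - A) = R n - (R n \<inter> A)" using sets.sets_into_space[OF R[of n]] by blast
      then show ?thesis using As R[of n] by (simp add: finite_measure_Diff)
    qed
    then show ?case using convS compl(2) by (simp add: convergent_diff)
  next
    case (union A)
    have As: "range A \<subseteq> sets D" using union(2) sG by simp
    have "\<And>k. (\<lambda>n. measure D (R n \<inter> A k)) \<longlonglongrightarrow> lim (\<lambda>n. measure D (R n \<inter> A k))"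
      using union(3) by (simp add: convergent_LIMSEQ_iff)
    from tannery_meas[OF fin union(1) As R this] show ?case by (auto simp: convergent_def)
  qed
qed

lemma dyn_tend:
  assumes fin: "finite_measure D" and sG: "sets D = sigma_sets (space D) G"
    and IG: "Int_stable G" and GP: "G \<subseteq> Pow (space D)"
    and N: "finite_measure N" "sets N = sets D"
    and R: "\<And>n. R n \<in> sets D"
    and conv: "\<And>A. A \<in> G \<Longrightarrow> (\<lambda>n. measure D (R n \<inter> A)) \<longlonglongrightarrow> measure N A"
    and convS: "(\<lambda>n. measure D (R n)) \<longlonglongrightarrow> measure N (space D)"
    and A: "A \<in> sets D"
  shows "(\<lambda>n. measure D (R n \<inter> A)) \<longlonglongrightarrow> measure N A"
proof -
  interpret finite_measure D by fact
  interpret N: finite_measure N by fact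
  have spN: "space N = space D" using N(2) by (rule sets_eq_imp_space_eq)
  from A have "A \<in> sigma_sets (space D) G" using sG by simp
  with IG GP show ?thesis
  proof (induct rule: sigma_sets_induct_disjoint)
    case (basic A) then show ?case by (rule conv)
  next
    case empty then show ?case by simp
  next
    case (compl A)
    have As: "A \<in> sets D" using compl(1) sG by simp
    have "measure D (R n \<inter> (space D - A)) = measure D (R n) - measure D (R n \<inter> A)" for n
    proof -
      have "R n \<inter> (space D - A) = R n - (R n \<inter> A)" using sets.sets_into_space[OF R[of n]] by blast
      then show ?thesis using As R[of n] by (simp add: finite_measure_Diff)
    qed
    moreover have "measure N (space D - A) = measure N (space D) - measure N A"
      using N.finite_measure_compl[of A] As N(2) spN by simp
    ultimately show ?case using convS compl(2) by (simp add: tendsto_diff)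
  next
    case (union A)
    have As: "range A \<subseteq> sets D" using union(2) sG by simp
    from tannery_meas[OF fin union(1) As R union(3)]
    have "(\<lambda>n. measure D (R n \<inter> (\<Union>k. A k))) \<longlonglongrightarrow> (\<Sum>k. measure N (A k))" .
    moreover have "(\<lambda>k. measure N (A k)) sums measure N (\<Union>k. A k)"
      using N.finite_measure_UNION[of A] As union(1) N(2) by simp
    ultimately show ?case by (simp add: sums_iff)
  qed
qed



lemma floor_sum_eq:
  fixes m :: nat and t :: real
  assumes "0 \<le> t" "t \<le> 1" "m > 0"
  shows "(\<Sum>j\<in>{0..int m}. (real_of_int j / m) * indicator {y. \<lfloor>m * y\<rfloor> = j} t)
         = real_of_int \<lfloor>m * t\<rfloor> / m"
proof -
  have "\<lfloor>m * t\<rfloor> \<in> {0..int m}"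
  proof -
    have "real m * t \<le> real m * 1" using assms by (intro mult_left_mono) auto
    then have "real m * t < real m + 1" by linarith
    then show ?thesis using assms by (auto intro!: floor_le_iff[THEN iffD2])
  qed
  moreover have "(real_of_int j / m) * indicator {y. \<lfloor>m * y\<rfloor> = j} t
     = (if \<lfloor>m * t\<rfloor> = j then real_of_int \<lfloor>m * t\<rfloor> / m else 0)" for j
    by (auto simp: indicator_def)
  ultimately show ?thesis by (simp add: sum.delta)
qed


lemma weak_bounded:
  fixes h :: "'a \<Rightarrow> real"
  assumes fin: "finite_measure D" and N: "finite_measure N" "sets N = sets D"
    and R: "\<And>n. R n \<in> sets D"
    and conv: "\<And>A. A \<in> sets D \<Longrightarrow> (\<lambda>n. measure D (R n \<inter> A)) \<longlonglongrightarrow> measure N A"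
    and hm[measurable]: "h \<in> borel_measurable D"
    and hb: "\<And>x. x \<in> space D \<Longrightarrow> 0 \<le> h x \<and> h x \<le> 1"
  shows "(\<lambda>n. \<integral>x. indicator (R n) x * h x \<partial>D) \<longlonglongrightarrow> (\<integral>x. h x \<partial>N)"
proof -
  interpret D: finite_measure D by fact
  interpret N: finite_measure N by fact
  have spN: "space N = space D" using N(2) by (rule sets_eq_imp_space_eq)
  have hmN[measurable]: "h \<in> borel_measurable N" using hm unfolding measurable_cong_sets[OF N(2) refl] .
  define E where "E m j = {x \<in> space D. \<lfloor>real m * h x\<rfloor> = j}" for m :: nat and j :: int
  have E[measurable]: "E m j \<in> sets D" for m j unfolding E_def by measurable
  have EN[measurable]: "E m j \<in> sets N" for m j using E N(2) by simp
  define s where "s m x = (\<Sum>j\<in>{0..int m}. (real_of_int j / m) * indicator (E m j) x)" for m x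
  have sm[measurable]: "s m \<in> borel_measurable D" for m unfolding s_def by measurable
  have smN[measurable]: "s m \<in> borel_measurable N" for m unfolding s_def by measurable
  have s_eq: "s m x = real_of_int \<lfloor>m * h x\<rfloor> / m" if "x \<in> space D" "m > 0" for m x
  proof -
    have "indicator (E m j) x = (indicator {y. \<lfloor>m * y\<rfloor> = j} (h x) :: real)" for j
      using that by (simp add: E_def indicator_def)
    then show ?thesis using floor_sum_eq[of "h x" m] hb[OF that(1)] that(2) by (simp add: s_def)
  qed
  have s_err: "\<bar>h x - s m x\<bar> \<le> 1 / m" if "x \<in> space D" "m > 0" for m x
  proof -
    have a: "real_of_int \<lfloor>m * h x\<rfloor> \<le> m * h x" "m * h x < real_of_int \<lfloor>m * h x\<rfloor> + 1"
      by linarith+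
    have "real_of_int \<lfloor>m * h x\<rfloor> / m \<le> h x"
      using a(1) that(2) by (simp add: divide_le_eq mult.commute)
    moreover have "h x < real_of_int \<lfloor>m * h x\<rfloor> / m + 1 / m"
      using a(2) that(2) by (simp add: field_simps)
    ultimately show ?thesis using s_eq[OF that] by simp
  qed
  have s_bd: "\<bar>s m x\<bar> \<le> 2" if "x \<in> space D" "m > 0" for m x
  proof -
    have "1 / real m \<le> 1" using that(2) by simp
    then show ?thesis using s_err[OF that] hb[OF that(1)] by linarith
  qed
  have int_sD: "(\<integral>x. indicator (R n) x * s m x \<partial>D) = (\<Sum>j\<in>{0..int m}. (real_of_int j / m) * measure D (R n \<inter> E m j))" for n m
  proof -
    have eq1: "(\<lambda>x. indicator (R n) x * s m x) = (\<lambda>x. \<Sum>j\<in>{0..int m}. (real_of_int j / m) * indicator (R n \<inter> E m j) x)"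
      by (auto simp: s_def sum_distrib_left indicator_inter_arith intro!: sum.cong)
    have eq2: "R n \<inter> E m j \<inter> space D = R n \<inter> E m j" for j using E[of m j] sets.sets_into_space by blast
    have "(\<integral>x. indicator (R n) x * s m x \<partial>D) = (\<integral>x. (\<Sum>j\<in>{0..int m}. (real_of_int j / m) * indicator (R n \<inter> E m j) x) \<partial>D)"
      by (simp only: eq1)
    also have "\<dots> = (\<Sum>j\<in>{0..int m}. (\<integral>x. (real_of_int j / m) * indicator (R n \<inter> E m j) x \<partial>D))"
      by (rule Bochner_Integration.integral_sum[where f="\<lambda>j x. (real_of_int j / m) * indicator (R n \<inter> E m j) x"]) (rule integrable_mult_right, rule integrable_real_indicator, (use R[of n] E in \<open>auto simp: less_top[symmetric]\<close>)+)
    also have "\<dots> = (\<Sum>j\<in>{0..int m}. (real_of_int j / m) * measure D (R n \<inter> E m j))"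
      by (intro sum.cong refl) (simp only: integral_mult_right_zero Bochner_Integration.integral_indicator eq2)
    finally show ?thesis .
  qed
  have int_sN: "(\<integral>x. s m x \<partial>N) = (\<Sum>j\<in>{0..int m}. (real_of_int j / m) * measure N (E m j))" for m
  proof -
    have eq2: "E m j \<inter> space N = E m j" for j using EN[of m j] sets.sets_into_space by blast
    have "(\<integral>x. s m x \<partial>N) = (\<Sum>j\<in>{0..int m}. (\<integral>x. (real_of_int j / m) * indicator (E m j) x \<partial>N))"
      unfolding s_def
      by (rule Bochner_Integration.integral_sum[where f="\<lambda>j x. (real_of_int j / m) * indicator (E m j) x"]) (rule integrable_mult_right, rule integrable_real_indicator, (use EN in \<open>auto simp: less_top[symmetric]\<close>)+)
    also have "\<dots> = (\<Sum>j\<in>{0..int m}. (real_of_int j / m) * measure N (E m j))"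
      by (intro sum.cong refl) (simp only: integral_mult_right_zero Bochner_Integration.integral_indicator eq2)
    finally show ?thesis .
  qed
  have lim_s: "(\<lambda>n. \<integral>x. indicator (R n) x * s m x \<partial>D) \<longlonglongrightarrow> (\<integral>x. s m x \<partial>N)" for m
    unfolding int_sD int_sN by (intro tendsto_sum tendsto_mult_left conv E)
  define CD where "CD = measure D (space D)"
  define CN where "CN = measure N (space N)"
  have CD: "CD \<ge> 0" and CN: "CN \<ge> 0" by (auto simp: CD_def CN_def)
  have errD: "\<bar>(\<integral>x. indicator (R n) x * h x \<partial>D) - (\<integral>x. indicator (R n) x * s m x \<partial>D)\<bar> \<le> CD / m"
    if "m > 0" for n m
  proof -
    have i1: "integrable D (\<lambda>x. indicator (R n) x * h x)"
      by (rule D.integrable_const_bound[where B=1]) (use R hb in \<open>auto simp: indicator_def\<close>)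
    have i2: "integrable D (\<lambda>x. indicator (R n) x * s m x)"
      by (rule D.integrable_const_bound[where B=2]) (use R s_bd[OF _ that] in \<open>auto simp: indicator_def\<close>)
    have "(\<integral>x. indicator (R n) x * h x \<partial>D) - (\<integral>x. indicator (R n) x * s m x \<partial>D)
        = (\<integral>x. indicator (R n) x * h x - indicator (R n) x * s m x \<partial>D)"
      using i1 i2 by simp
    also have "\<bar>\<dots>\<bar> \<le> (\<integral>x. \<bar>indicator (R n) x * h x - indicator (R n) x * s m x\<bar> \<partial>D)"
      by (rule integral_abs_bound)
    also have "\<dots> \<le> (\<integral>x. 1 / m \<partial>D)"
    proof (rule integral_mono)
      show "integrable D (\<lambda>x. \<bar>indicator (R n) x * h x - indicator (R n) x * s m x\<bar>)" using i1 i2 by simp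
      show "\<bar>indicator (R n) x * h x - indicator (R n) x * s m x\<bar> \<le> 1 / real m" if "x \<in> space D" for x
        using s_err[OF that \<open>m > 0\<close>] \<open>m > 0\<close> by (auto simp: indicator_def)
    qed simp
    also have "\<dots> = CD / m" by (simp add: CD_def)
    finally show ?thesis .
  qed
  have errN: "\<bar>(\<integral>x. h x \<partial>N) - (\<integral>x. s m x \<partial>N)\<bar> \<le> CN / m" if "m > 0" for m
  proof -
    have i1: "integrable N h" by (rule N.integrable_const_bound[where B=1]) (use hb spN in auto)
    have i2: "integrable N (s m)" by (rule N.integrable_const_bound[where B=2]) (use s_bd[OF _ that] spN in auto)
    have "(\<integral>x. h x \<partial>N) - (\<integral>x. s m x \<partial>N) = (\<integral>x. h x - s m x \<partial>N)"
      using i1 i2 by simp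
    also have "\<bar>\<dots>\<bar> \<le> (\<integral>x. \<bar>h x - s m x\<bar> \<partial>N)"
      by (rule integral_abs_bound)
    also have "\<dots> \<le> (\<integral>x. 1 / m \<partial>N)"
    proof (rule integral_mono)
      show "integrable N (\<lambda>x. \<bar>h x - s m x\<bar>)" using i1 i2 by simp
      show "\<bar>h x - s m x\<bar> \<le> 1 / real m" if "x \<in> space N" for x
        using s_err[of x m] that spN \<open>m > 0\<close> by auto
    qed simp
    also have "\<dots> = CN / m" by (simp add: CN_def)
    finally show ?thesis .
  qed
  show ?thesis
  proof (rule LIMSEQ_I)
    fix r :: real assume r: "0 < r"
    obtain m :: nat where m: "m > 0" "(CD + CN) / m < r / 2"
    proof -
      obtain m :: nat where m0: "2 * (CD + CN) / r < m" using reals_Archimedean2 by blast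
      have m1: "2 * (CD + CN) / r < m + 1" using m0 by simp
      have "2 * (CD + CN) < (m + 1) * r" using m1 r by (simp add: pos_divide_less_eq)
      then have "(CD + CN) / (m + 1) < r / 2" by (simp add: divide_less_eq algebra_simps)
      then show ?thesis by (intro that[of "m+1"]) (auto simp: add.commute)
    qed
    obtain no where no: "\<And>n. n \<ge> no \<Longrightarrow> norm ((\<integral>x. indicator (R n) x * s m x \<partial>D) - (\<integral>x. s m x \<partial>N)) < r / 2"
      using LIMSEQ_D[OF lim_s[of m], of "r/2"] r by auto
    have "norm ((\<integral>x. indicator (R n) x * h x \<partial>D) - (\<integral>x. h x \<partial>N)) < r" if "n \<ge> no" for n
    proof -
      have "CD / m + CN / m = (CD + CN) / m" by (simp add: add_divide_distrib)
      then have "CD / m + CN / m < r / 2" using m(2) by simp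
      then show ?thesis using errD[OF m(1), of n] errN[OF m(1)] no[OF that] unfolding real_norm_def
        by linarith
    qed
    then show "\<exists>no. \<forall>n\<ge>no. norm ((\<integral>x. indicator (R n) x * h x \<partial>D) - (\<integral>x. h x \<partial>N)) < r" by blast
  qed
qed

lemma limit_density:
  assumes fin: "finite_measure M"
    and R: "\<And>n. R n \<in> sets M"
    and conv: "\<And>A. A \<in> sets M \<Longrightarrow> convergent (\<lambda>n. measure M (R n \<inter> A))"
  obtains p where "p \<in> borel_measurable M" "\<And>x. 0 \<le> p x" "\<And>x. p x \<le> 1"
    "\<And>A. A \<in> sets M \<Longrightarrow> (\<lambda>n. measure M (R n \<inter> A)) \<longlonglongrightarrow> (\<integral>x. indicator A x * p x \<partial>M)"
proof -
  interpret finite_measure M by fact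
  define L where "L A = lim (\<lambda>n. measure M (R n \<inter> A))" for A
  have Llim: "(\<lambda>n. measure M (R n \<inter> A)) \<longlonglongrightarrow> L A" if "A \<in> sets M" for A
    using conv[OF that] unfolding L_def by (simp add: convergent_LIMSEQ_iff)
  have L0: "0 \<le> L A" if "A \<in> sets M" for A
    by (rule LIMSEQ_le_const[OF Llim[OF that]]) auto
  have Lle: "L A \<le> measure M A" if "A \<in> sets M" for A
    by (rule LIMSEQ_le_const2[OF Llim[OF that]]) (use that R in \<open>auto intro!: finite_measure_mono\<close>)
  define \<nu> where "\<nu> A = ennreal (L A)" for A
  have Lempty: "L {} = 0" unfolding L_def by simp
  have ca: "countably_additive (sets M) \<nu>"
    unfolding countably_additive_def
  proof (intro allI impI)
    fix A :: "nat \<Rightarrow> 'a set" assume A: "range A \<subseteq> sets M" "disjoint_family A" "\<Union> (range A) \<in> sets M"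
    have t: "(\<lambda>n. measure M (R n \<inter> (\<Union>k. A k))) \<longlonglongrightarrow> (\<Sum>k. L (A k))"
      by (rule tannery_meas[OF fin A(2,1) R]) (use A(1) Llim in auto)
    have eq: "L (\<Union>k. A k) = (\<Sum>k. L (A k))"
      using LIMSEQ_unique[OF Llim[OF A(3)] t] .
    have sm: "summable (\<lambda>k. L (A k))"
    proof (rule summable_comparison_test)
      show "\<exists>N. \<forall>n\<ge>N. norm (L (A n)) \<le> measure M (A n)" using A(1) L0 Lle by auto
      show "summable (\<lambda>n. measure M (A n))"
        using finite_measure_UNION[OF A(1,2)] by (simp add: sums_iff)
    qed
    show "(\<Sum>i. \<nu> (A i)) = \<nu> (\<Union> (range A))"
      unfolding \<nu>_def eq using sm A(1) L0 by (subst suminf_ennreal2) auto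
  qed
  have pos: "positive (sets M) \<nu>" unfolding positive_def \<nu>_def using Lempty by simp
  define N where "N = measure_of (space M) (sets M) \<nu>"
  have eN: "emeasure N A = \<nu> A" if "A \<in> sets M" for A
    unfolding N_def by (rule emeasure_measure_of_sigma[OF sets.sigma_algebra_axioms pos ca that])
  have sN: "sets N = sets M" unfolding N_def by simp
  have ac: "absolutely_continuous M N"
    unfolding absolutely_continuous_def
  proof
    fix A assume "A \<in> null_sets M"
    then have A: "A \<in> sets M" "measure M A = 0" by (auto simp: null_sets_def measure_def)
    then have "L A = 0" using L0[OF A(1)] Lle[OF A(1)] by simp
    then show "A \<in> null_sets N" using A eN sN by (simp add: null_sets_def \<nu>_def)
  qed
  obtain f where fm[measurable]: "f \<in> borel_measurable M" and fN: "density M f = N"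
    using Radon_Nikodym[OF ac sN] by blast
  have fA: "(\<integral>\<^sup>+x. f x * indicator A x \<partial>M) = ennreal (L A)" if "A \<in> sets M" for A
    using emeasure_density[OF fm that] fN eN[OF that] by (simp add: \<nu>_def)
  have f1: "AE x in M. f x \<le> 1"
  proof (rule ccontr)
    assume nAE: "\<not> (AE x in M. f x \<le> 1)"
    define S where "S = {x \<in> space M. 1 < f x}"
    have S[measurable]: "S \<in> sets M" unfolding S_def by measurable
    have "(\<integral>\<^sup>+x. indicator S x \<partial>M) < (\<integral>\<^sup>+x. f x * indicator S x \<partial>M)"
    proof (rule nn_integral_less)
      show "(\<integral>\<^sup>+x. indicator S x \<partial>M) \<noteq> \<infinity>" using S by simp
      show "AE x in M. indicator S x \<le> f x * indicator S x"
        by (rule AE_I2) (auto simp: S_def indicator_def less_imp_le)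
      show "\<not> (AE x in M. f x * indicator S x \<le> indicator S x)"
      proof
        assume "AE x in M. f x * indicator S x \<le> indicator S x"
        then have "AE x in M. f x \<le> 1"
          using AE_space by eventually_elim (auto simp: S_def indicator_def not_less of_bool_def split: if_splits)
        with nAE show False by simp
      qed
    qed auto
    also have "\<dots> = ennreal (L S)" by (rule fA[OF S])
    also have "\<dots> \<le> ennreal (measure M S)" using Lle[OF S] by simp
    also have "\<dots> = (\<integral>\<^sup>+x. indicator S x \<partial>M)" using S by (simp add: emeasure_eq_measure)
    finally show False by simp
  qed
  define p where "p x = min 1 (enn2real (f x))" for x
  have pm: "p \<in> borel_measurable M" unfolding p_def by measurable
  have p0: "0 \<le> p x" for x unfolding p_def by simp
  have fp: "AE x in M. f x = ennreal (p x)"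
  proof (rule AE_mp[OF f1], rule AE_I2, rule impI)
    fix x assume "f x \<le> 1"
    then have "f x < \<top>" using order.strict_trans1[of "f x" 1 \<top>] by simp
    then have "f x = ennreal (enn2real (f x))" by simp
    moreover have "enn2real (f x) \<le> 1" using \<open>f x \<le> 1\<close> by (simp add: enn2real_leI)
    ultimately show "f x = ennreal (p x)" unfolding p_def by (simp add: min_def)
  qed
  have p1: "p x \<le> 1" for x unfolding p_def by simp
  have pint: "(\<integral>x. indicator A x * p x \<partial>M) = L A" if A: "A \<in> sets M" for A
  proof -
    have "(\<integral>x. indicator A x * p x \<partial>M) = enn2real (\<integral>\<^sup>+x. ennreal (indicator A x * p x) \<partial>M)"
      by (rule integral_eq_nn_integral) (use A pm p0 in auto)
    also have "(\<integral>\<^sup>+x. ennreal (indicator A x * p x) \<partial>M) = (\<integral>\<^sup>+x. f x * indicator A x \<partial>M)"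
      by (rule nn_integral_cong_AE) (use fp in \<open>eventually_elim, auto simp: indicator_def\<close>)
    also have "\<dots> = ennreal (L A)" by (rule fA[OF A])
    finally show ?thesis using L0[OF A] by simp
  qed
  show ?thesis
    by (rule that[OF pm p0 p1]) (simp add: pint Llim)
qed




lemma emeasure_density_real:
  assumes "finite_measure M" "p \<in> borel_measurable M" "\<And>x. 0 \<le> p x" "\<And>x. p x \<le> 1" "a \<in> sets M"
  shows "emeasure (density M (\<lambda>x. ennreal (p x))) a = ennreal (\<integral>x. indicator a x * p x \<partial>M)"
proof -
  interpret finite_measure M by fact
  have "emeasure (density M (\<lambda>x. ennreal (p x))) a = (\<integral>\<^sup>+x. ennreal (p x) * indicator a x \<partial>M)"
    using assms by (simp add: emeasure_density)
  also have "\<dots> = (\<integral>\<^sup>+x. ennreal (indicator a x * p x) \<partial>M)"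
    by (intro nn_integral_cong) (auto simp: indicator_def)
  also have "\<dots> = ennreal (\<integral>x. indicator a x * p x \<partial>M)"
  proof (rule nn_integral_eq_integral)
    show "integrable M (\<lambda>x. indicator a x * p x)"
      by (rule integrable_const_bound[where B=1]) (use assms in \<open>auto simp: indicator_def\<close>)
  qed (use assms in auto)
  finally show ?thesis .
qed

lemma product_limit:
  fixes W :: "'a \<Rightarrow> 'a \<Rightarrow> real"
  assumes prob: "prob_space M"
    and P: "\<And>n. P n \<in> sets M" and Q: "\<And>n. Q n \<in> sets M"
    and pm[measurable]: "p \<in> borel_measurable M" and p01: "\<And>x. 0 \<le> p x" "\<And>x. p x \<le> 1"
    and qm[measurable]: "q \<in> borel_measurable M" and q01: "\<And>x. 0 \<le> q x" "\<And>x. q x \<le> 1"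
    and Pc: "\<And>A. A \<in> sets M \<Longrightarrow> (\<lambda>n. measure M (P n \<inter> A)) \<longlonglongrightarrow> (\<integral>x. indicator A x * p x \<partial>M)"
    and Qc: "\<And>A. A \<in> sets M \<Longrightarrow> (\<lambda>n. measure M (Q n \<inter> A)) \<longlonglongrightarrow> (\<integral>x. indicator A x * q x \<partial>M)"
    and Wm[measurable]: "(\<lambda>z. W (fst z) (snd z)) \<in> borel_measurable (M \<Otimes>\<^sub>M M)"
    and Wb: "\<And>x y. 0 \<le> W x y \<and> W x y \<le> 1"
  shows "(\<lambda>n. \<integral>z. indicator (P n \<times> Q n) z * W (fst z) (snd z) \<partial>(M \<Otimes>\<^sub>M M))
           \<longlonglongrightarrow> (\<integral>z. p (fst z) * q (snd z) * W (fst z) (snd z) \<partial>(M \<Otimes>\<^sub>M M))"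
proof -
  interpret M: prob_space M by fact
  define D where "D = M \<Otimes>\<^sub>M M"
  have Dp: "prob_space D" unfolding D_def by (rule prob_space_pair[OF prob prob])
  interpret D: prob_space D by (rule Dp)
  have spD: "space D = space M \<times> space M" unfolding D_def by (simp add: space_pair_measure)
  define G where "G = {a \<times> b | a b. a \<in> sets M \<and> b \<in> sets M}"
  have sD: "sets D = sigma_sets (space D) G" unfolding D_def G_def spD[unfolded D_def]
    by (rule sets_pair_measure)
  have IG: "Int_stable G" unfolding G_def by (rule Int_stable_pair_measure_generator)
  have GP: "G \<subseteq> Pow (space D)" unfolding G_def spD using sets.sets_into_space by blast
  define pp where "pp = density M (\<lambda>x. ennreal (p x))"
  define qq where "qq = density M (\<lambda>x. ennreal (q x))"
  have ppe: "emeasure pp a = ennreal (\<integral>x. indicator a x * p x \<partial>M)" if "a \<in> sets M" for a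
    unfolding pp_def by (rule emeasure_density_real[OF M.finite_measure_axioms pm p01 that])
  have qqe: "emeasure qq a = ennreal (\<integral>x. indicator a x * q x \<partial>M)" if "a \<in> sets M" for a
    unfolding qq_def by (rule emeasure_density_real[OF M.finite_measure_axioms qm q01 that])
  have Ip: "0 \<le> (\<integral>x. indicator a x * p x \<partial>M)" for a by (rule integral_nonneg_AE) (use p01 in \<open>auto simp: indicator_def\<close>)
  have Iq: "0 \<le> (\<integral>x. indicator a x * q x \<partial>M)" for a by (rule integral_nonneg_AE) (use q01 in \<open>auto simp: indicator_def\<close>)
  have qqfin: "finite_measure qq"
  proof (rule finite_measureI)
    have "space qq = space M" by (simp add: qq_def)
    then show "emeasure qq (space qq) \<noteq> \<infinity>" using qqe[of "space M"] by simp
  qed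
  then have qqsf: "sigma_finite_measure qq" by (rule finite_measure.sigma_finite_measure)
  define N0 where "N0 = density D (\<lambda>z. ennreal (p (fst z) * q (snd z)))"
  have N0eq: "N0 = pp \<Otimes>\<^sub>M qq"
  proof -
    have "pp \<Otimes>\<^sub>M qq = density (M \<Otimes>\<^sub>M M) (\<lambda>(x,y). ennreal (p x) * ennreal (q y))"
      unfolding pp_def qq_def
      by (rule pair_measure_density) (use qqsf M.sigma_finite_measure_axioms in \<open>auto simp: qq_def\<close>)
    also have "(\<lambda>(x,y). ennreal (p x) * ennreal (q y)) = (\<lambda>z. ennreal (p (fst z) * q (snd z)))"
      by (auto simp: ennreal_mult p01 q01)
    finally show ?thesis unfolding N0_def D_def by simp
  qed
  have sN0: "sets N0 = sets D" unfolding N0_def by simp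
  have N0le: "emeasure N0 E \<le> emeasure D E" if "E \<in> sets D" for E
  proof -
    have "emeasure N0 E = (\<integral>\<^sup>+z. ennreal (p (fst z) * q (snd z)) * indicator E z \<partial>D)"
      unfolding N0_def using that by (subst emeasure_density) (auto simp: D_def)
    also have "\<dots> \<le> (\<integral>\<^sup>+z. indicator E z \<partial>D)"
    proof (rule nn_integral_mono)
      fix z
      have "p (fst z) * q (snd z) \<le> 1 * 1" using p01 q01 by (intro mult_mono) auto
      then show "ennreal (p (fst z) * q (snd z)) * indicator E z \<le> indicator E z"
        by (auto simp: indicator_def)
    qed
    also have "\<dots> = emeasure D E" using that by simp
    finally show ?thesis .
  qed
  have N0fin: "finite_measure N0"
  proof (rule finite_measureI)
    have "emeasure N0 (space N0) \<le> emeasure D (space D)"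
      using N0le[of "space D"] sets_eq_imp_space_eq[OF sN0] by simp
    then show "emeasure N0 (space N0) \<noteq> \<infinity>" using D.emeasure_space_1 by (auto simp: top_unique)
  qed
  interpret N0: finite_measure N0 by (rule N0fin)
  have N0rect: "measure N0 (a \<times> b) = (\<integral>x. indicator a x * p x \<partial>M) * (\<integral>x. indicator b x * q x \<partial>M)"
    if "a \<in> sets M" "b \<in> sets M" for a b
  proof -
    interpret Q: sigma_finite_measure qq by (rule qqsf)
    have "emeasure N0 (a \<times> b) = emeasure pp a * emeasure qq b"
      unfolding N0eq by (rule Q.emeasure_pair_measure_Times) (use that in \<open>auto simp: pp_def qq_def\<close>)
    then show ?thesis unfolding measure_def using that ppe qqe Ip Iq by (simp add: enn2real_mult ennreal_mult[symmetric])
  qed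
  define R where "R n = P n \<times> Q n" for n
  have R: "R n \<in> sets D" for n unfolding R_def D_def using P Q by simp
  have Drect: "measure D (a \<times> b) = measure M a * measure M b" if "a \<in> sets M" "b \<in> sets M" for a b
    unfolding D_def measure_def using that by (simp add: M.emeasure_pair_measure_Times enn2real_mult)
  have convG: "(\<lambda>n. measure D (R n \<inter> A)) \<longlonglongrightarrow> measure N0 A" if AG: "A \<in> G" for A
  proof -
    obtain a b where ab: "A = a \<times> b" "a \<in> sets M" "b \<in> sets M" using AG unfolding G_def by blast
    have "R n \<inter> A = (P n \<inter> a) \<times> (Q n \<inter> b)" for n unfolding R_def ab by blast
    then have "measure D (R n \<inter> A) = measure M (P n \<inter> a) * measure M (Q n \<inter> b)" for n
      using Drect P Q ab by simp
    then show ?thesis unfolding ab(1) N0rect[OF ab(2,3)] using Pc[OF ab(2)] Qc[OF ab(3)]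
      by (simp add: tendsto_mult)
  qed
  have convS: "(\<lambda>n. measure D (R n)) \<longlonglongrightarrow> measure N0 (space D)"
  proof -
    have "space D \<in> G" unfolding spD G_def by blast
    moreover have "R n \<inter> space D = R n" for n using R[of n] sets.sets_into_space by blast
    ultimately show ?thesis using convG[of "space D"] by simp
  qed
  have convAll: "(\<lambda>n. measure D (R n \<inter> A)) \<longlonglongrightarrow> measure N0 A" if "A \<in> sets D" for A
    by (rule dyn_tend[OF D.finite_measure_axioms sD IG GP N0fin sN0 R convG convS that])
  have WmD[measurable]: "(\<lambda>z. W (fst z) (snd z)) \<in> borel_measurable D" unfolding D_def by (rule Wm)
  have "(\<lambda>n. \<integral>z. indicator (R n) z * W (fst z) (snd z) \<partial>D) \<longlonglongrightarrow> (\<integral>z. W (fst z) (snd z) \<partial>N0)"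
    by (rule weak_bounded[OF D.finite_measure_axioms N0fin sN0 R convAll WmD]) (use Wb in auto)
  also have "(\<integral>z. W (fst z) (snd z) \<partial>N0) = (\<integral>z. p (fst z) * q (snd z) * W (fst z) (snd z) \<partial>D)"
    unfolding N0_def by (subst integral_density) (auto simp: D_def p01 q01)
  finally show ?thesis unfolding D_def R_def .
qed




lemma countable_generator:
  obtains G :: "'a::second_countable_topology set set" where "countable G" "Int_stable G" "UNIV \<in> G"
    "sets borel = sigma_sets UNIV G"
proof -
  obtain B :: "'a set set" where B: "countable B" "topological_basis B" using ex_countable_basis by blast
  define G where "G = (\<lambda>F. \<Inter>F) ` {F. finite F \<and> F \<subseteq> B}"
  have cG: "countable G" unfolding G_def using B(1) by (intro countable_image countable_Collect_finite_subset)
  have IG: "Int_stable G"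
    unfolding Int_stable_def G_def
  proof (clarify)
    fix F F' assume "finite F" "F \<subseteq> B" "finite F'" "F' \<subseteq> B"
    then show "\<Inter>F \<inter> \<Inter>F' \<in> (\<lambda>F. \<Inter>F) ` {F. finite F \<and> F \<subseteq> B}"
      by (intro image_eqI[where x="F \<union> F'"]) auto
  qed
  have UG: "UNIV \<in> G" unfolding G_def by (intro image_eqI[where x="{}"]) auto
  have "sigma_sets UNIV {S. open S} = sigma_sets UNIV G"
  proof (rule sigma_sets_eqI)
    fix a :: "'a set" assume "a \<in> {S. open S}"
    then obtain B' where B': "B' \<subseteq> B" "\<Union>B' = a" using B(2) unfolding topological_basis_def by blast
    interpret sigma_algebra UNIV "sigma_sets UNIV G" by (rule sigma_algebra_sigma_sets) simp
    have "B' \<subseteq> sigma_sets UNIV G"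
    proof
      fix b assume "b \<in> B'"
      then have "b \<in> G" unfolding G_def using B' by (intro image_eqI[where x="{b}"]) auto
      then show "b \<in> sigma_sets UNIV G" by (rule sigma_sets.Basic)
    qed
    moreover have "countable B'" using B' B(1) countable_subset by blast
    ultimately show "a \<in> sigma_sets UNIV G" using B'(2) countable_Union by blast
  next
    fix b assume "b \<in> G"
    then obtain F where F: "finite F" "F \<subseteq> B" "b = \<Inter>F" unfolding G_def by blast
    have "open b" using F B(2) unfolding topological_basis_def by (auto intro!: open_Inter)
    then show "b \<in> sigma_sets UNIV {S. open S}" by (intro sigma_sets.Basic) simp
  qed
  then have "sets borel = sigma_sets UNIV G" unfolding borel_def by simp
  then show ?thesis using that cG IG UG by blast
qed

lemma diag_conv:
  fixes X :: "nat \<Rightarrow> nat \<Rightarrow> real"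
  assumes bd: "\<And>k n. \<bar>X k n\<bar> \<le> 1"
  obtains r where "strict_mono r" "\<And>k. convergent (\<lambda>n. X k (r n))"
proof -
  define Pk where "Pk k s = convergent (\<lambda>n. X k (s n))" for k and s :: "nat \<Rightarrow> nat"
  interpret subseqs Pk
  proof
    fix k and s :: "nat \<Rightarrow> nat" assume "strict_mono s"
    have "bounded (range (\<lambda>n. X k (s n)))" using bd by (auto simp: bounded_iff)
    from bounded_imp_convergent_subsequence[OF this] obtain l r where
      "strict_mono r" "((\<lambda>n. X k (s n)) \<circ> r) \<longlonglongrightarrow> l" by blast
    then show "\<exists>r'. strict_mono r' \<and> Pk k (s \<circ> r')" by (auto simp: Pk_def convergent_def o_def)
  qed
  have "Pk k (diagseq \<circ> (+) (Suc k))" for k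
  proof (rule diagseq_holds)
    fix r s :: "nat \<Rightarrow> nat" and n assume "strict_mono r" "Pk n s"
    then show "Pk n (s \<circ> r)" using convergent_subseq_convergent[of "\<lambda>m. X n (s m)" r]
      by (simp add: Pk_def o_def)
  qed
  then have "convergent (\<lambda>n. X k (diagseq n))" for k
  proof -
    from \<open>Pk k (diagseq \<circ> (+) (Suc k))\<close> obtain l where "(\<lambda>n. X k (diagseq (n + Suc k))) \<longlonglongrightarrow> l"
      by (auto simp: Pk_def convergent_def o_def add.commute)
    then have "(\<lambda>n. X k (diagseq n)) \<longlonglongrightarrow> l" by (rule LIMSEQ_offset[of "\<lambda>n. X k (diagseq n)" "Suc k"])
    then show ?thesis by (auto simp: convergent_def)
  qed
  then show ?thesis using that subseq_diagseq by blast
qed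

lemma cut_bound:
  fixes U :: "'a \<Rightarrow> 'a \<Rightarrow> real"
  assumes prob: "prob_space M"
    and Um: "(\<lambda>z. U (fst z) (snd z)) \<in> borel_measurable (M \<Otimes>\<^sub>M M)"
    and Ub: "\<And>x y. \<bar>U x y\<bar> \<le> 1"
    and S: "S \<in> sets M" and T: "T \<in> sets M"
  shows "\<bar>LINT z : S \<times> T | M \<Otimes>\<^sub>M M. U (fst z) (snd z)\<bar> \<le> cut_norm M U"
proof -
  interpret D: prob_space "M \<Otimes>\<^sub>M M" by (rule prob_space_pair[OF prob prob])
  have bd: "\<bar>LINT z : A | M \<Otimes>\<^sub>M M. U (fst z) (snd z)\<bar> \<le> 1" if "A \<in> sets (M \<Otimes>\<^sub>M M)" for A
  proof -
    have int: "integrable (M \<Otimes>\<^sub>M M) (\<lambda>z. indicator A z * U (fst z) (snd z))"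
      by (rule D.integrable_const_bound[where B=1]) (use Um Ub that in \<open>auto simp: indicator_def\<close>)
    have "\<bar>LINT z : A | M \<Otimes>\<^sub>M M. U (fst z) (snd z)\<bar> \<le> (\<integral>z. \<bar>indicator A z * U (fst z) (snd z)\<bar> \<partial>(M \<Otimes>\<^sub>M M))"
      unfolding set_lebesgue_integral_def by (simp only: real_scaleR_def integral_abs_bound)
    also have "\<dots> \<le> (\<integral>z. 1 \<partial>(M \<Otimes>\<^sub>M M))"
      by (rule integral_mono) (use int Ub in \<open>auto simp: indicator_def\<close>)
    also have "\<dots> = 1" by (simp add: D.prob_space)
    finally show ?thesis .
  qed
  show ?thesis unfolding cut_norm_def
  proof (rule cSUP_upper2[where x="(S, T)"])
    show "(S, T) \<in> sets M \<times> sets M" using S T by simp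
    show "bdd_above ((\<lambda>ST. \<bar>LINT p : fst ST \<times> snd ST | M \<Otimes>\<^sub>M M. U (fst p) (snd p)\<bar>) ` (sets M \<times> sets M))"
      by (rule bdd_aboveI[where M=1]) (auto intro!: bd)
  qed simp
qed

lemma L1_half:
  assumes prob: "prob_space M" and fm: "f \<in> borel_measurable M" and h: "half_integral M f"
  shows "L1_norm M f = 1 - measure M (f -` {0} \<inter> space M) / 2 - measure M (f -` {0, 1/2} \<inter> space M) / 2"
proof -
  interpret prob_space M by fact
  define Z where "Z = f -` {0} \<inter> space M"
  define K where "K = f -` {0, 1/2} \<inter> space M"
  have Z: "Z \<in> sets M" unfolding Z_def using fm by measurable
  have K: "K \<in> sets M" unfolding K_def using fm by measurable
  have eq: "\<bar>f x\<bar> = 1 - indicator Z x / 2 - indicator K x / 2" if "x \<in> space M" for x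
    using h that unfolding half_integral_def Z_def K_def by (auto simp: indicator_def)
  have "L1_norm M f = (\<integral>x. 1 - indicator Z x / 2 - indicator K x / 2 \<partial>M)"
    unfolding L1_norm_def by (rule Bochner_Integration.integral_cong[OF refl eq])
  also have "\<dots> = (\<integral>x. 1 - indicator Z x / (2::real) \<partial>M) - (\<integral>x. indicator K x / 2 \<partial>M)"
    by (rule Bochner_Integration.integral_diff) (use Z K in \<open>auto simp: less_top[symmetric]\<close>)
  also have "(\<integral>x. 1 - indicator Z x / (2::real) \<partial>M) = (\<integral>x. 1 \<partial>M) - (\<integral>x. indicator Z x / 2 \<partial>M)"
    by (rule Bochner_Integration.integral_diff) (use Z K in \<open>auto simp: less_top[symmetric]\<close>)
  also have "(\<integral>x. indicator Z x / 2 \<partial>M) = measure M Z / 2"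
    using Z sets.sets_into_space[OF Z] by (simp add: Int_absorb2)
  also have "(\<integral>x. indicator K x / 2 \<partial>M) = measure M K / 2"
    using K sets.sets_into_space[OF K] by (simp add: Int_absorb2)
  also have "(\<integral>x. 1 \<partial>M) = (1::real)" by (simp add: prob_space)
  finally show ?thesis unfolding Z_def K_def .
qed



lemma graphon_meas:
  assumes "graphon M V"
  shows "(\<lambda>z. V (fst z) (snd z)) \<in> borel_measurable (M \<Otimes>\<^sub>M M)" "\<And>x y. 0 \<le> V x y \<and> V x y \<le> 1"
proof -
  have "(\<lambda>(x, y). V x y) = (\<lambda>z. V (fst z) (snd z))" by auto
  then show "(\<lambda>z. V (fst z) (snd z)) \<in> borel_measurable (M \<Otimes>\<^sub>M M)"
    using assms unfolding graphon_def by metis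
  show "\<And>x y. 0 \<le> V x y \<and> V x y \<le> 1" using assms unfolding graphon_def by auto
qed

lemma zero_lim:
  fixes Ws :: "nat \<Rightarrow> 'a \<Rightarrow> 'a \<Rightarrow> real"
  assumes prob: "prob_space M"
    and gs: "\<And>n. graphon M (Ws n)" and g: "graphon M W"
    and cut: "(\<lambda>n. cut_norm M (\<lambda>x y. Ws n x y - W x y)) \<longlonglongrightarrow> 0"
    and S: "\<And>n. S n \<in> sets M" and T: "\<And>n. T n \<in> sets M"
    and AE0: "\<And>n. AE z in M \<Otimes>\<^sub>M M. indicator (S n \<times> T n) z * Ws n (fst z) (snd z) = 0"
  shows "(\<lambda>n. \<integral>z. indicator (S n \<times> T n) z * W (fst z) (snd z) \<partial>(M \<Otimes>\<^sub>M M)) \<longlonglongrightarrow> 0"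
proof (rule Lim_null_comparison)
  interpret D: prob_space "M \<Otimes>\<^sub>M M" by (rule prob_space_pair[OF prob prob])
  note Wm = graphon_meas[OF g] and Wsm = graphon_meas[OF gs]
  show "\<forall>\<^sub>F n in sequentially. norm (\<integral>z. indicator (S n \<times> T n) z * W (fst z) (snd z) \<partial>(M \<Otimes>\<^sub>M M))
          \<le> cut_norm M (\<lambda>x y. Ws n x y - W x y)"
  proof (rule always_eventually, rule allI)
    fix n
    have ST: "S n \<times> T n \<in> sets (M \<Otimes>\<^sub>M M)" using S T by simp
    have i1: "integrable (M \<Otimes>\<^sub>M M) (\<lambda>z. indicator (S n \<times> T n) z * Ws n (fst z) (snd z))"
      by (rule D.integrable_const_bound[where B=1]) (use Wsm ST in \<open>auto simp: indicator_def\<close>)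
    have i2: "integrable (M \<Otimes>\<^sub>M M) (\<lambda>z. indicator (S n \<times> T n) z * W (fst z) (snd z))"
      by (rule D.integrable_const_bound[where B=1]) (use Wm ST in \<open>auto simp: indicator_def\<close>)
    have z: "(\<integral>z. indicator (S n \<times> T n) z * Ws n (fst z) (snd z) \<partial>(M \<Otimes>\<^sub>M M)) = 0"
      by (rule integral_eq_zero_AE[OF AE0])
    have "(LINT z : S n \<times> T n | M \<Otimes>\<^sub>M M. Ws n (fst z) (snd z) - W (fst z) (snd z))
        = (\<integral>z. indicator (S n \<times> T n) z * Ws n (fst z) (snd z) - indicator (S n \<times> T n) z * W (fst z) (snd z) \<partial>(M \<Otimes>\<^sub>M M))"
      unfolding set_lebesgue_integral_def by (simp add: algebra_simps)
    also have "\<dots> = - (\<integral>z. indicator (S n \<times> T n) z * W (fst z) (snd z) \<partial>(M \<Otimes>\<^sub>M M))"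
      using i1 i2 z by simp
    finally have eq: "(LINT z : S n \<times> T n | M \<Otimes>\<^sub>M M. Ws n (fst z) (snd z) - W (fst z) (snd z))
        = - (\<integral>z. indicator (S n \<times> T n) z * W (fst z) (snd z) \<partial>(M \<Otimes>\<^sub>M M))" .
    have "\<bar>LINT z : S n \<times> T n | M \<Otimes>\<^sub>M M. Ws n (fst z) (snd z) - W (fst z) (snd z)\<bar>
          \<le> cut_norm M (\<lambda>x y. Ws n x y - W x y)"
    proof (rule cut_bound[OF prob _ _ S T, of "\<lambda>x y. Ws n x y - W x y", simplified])
      show "(\<lambda>z. Ws n (fst z) (snd z) - W (fst z) (snd z)) \<in> borel_measurable (M \<Otimes>\<^sub>M M)"
        using Wm(1) Wsm(1) by measurable
      show "\<And>x y. \<bar>Ws n x y - W x y\<bar> \<le> 1" using Wm(2) Wsm(2)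
        by (smt (verit))
    qed
    then show "norm (\<integral>z. indicator (S n \<times> T n) z * W (fst z) (snd z) \<partial>(M \<Otimes>\<^sub>M M))
          \<le> cut_norm M (\<lambda>x y. Ws n x y - W x y)" using eq by simp
  qed
qed (rule cut)

lemma cover_AE:
  assumes fvc: "fractional_vertex_cover M V f" and g: "graphon M V"
    and ST: "\<And>x y. x \<in> S \<Longrightarrow> y \<in> T \<Longrightarrow> f x + f y < 1"
  shows "AE z in M \<Otimes>\<^sub>M M. indicator (S \<times> T) z * V (fst z) (snd z) = 0"
proof -
  have "AE z in M \<Otimes>\<^sub>M M. V (fst z) (snd z) > 0 \<longrightarrow> f (fst z) + f (snd z) \<ge> 1"
    using fvc unfolding fractional_vertex_cover_def by blast
  then show ?thesis
  proof eventually_elim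
    case (elim z)
    show ?case
    proof (cases "z \<in> S \<times> T")
      case True
      then have "f (fst z) + f (snd z) < 1" using ST by (cases z) auto
      then have "\<not> V (fst z) (snd z) > 0" using elim by linarith
      then have "V (fst z) (snd z) = 0" using graphon_meas(2)[OF g, of "fst z" "snd z"] by linarith
      then show ?thesis by simp
    qed simp
  qed
qed



theorem proposition4p2:
  fixes M :: "'a::polish_space measure"
    and Ws :: "nat \<Rightarrow> 'a \<Rightarrow> 'a \<Rightarrow> real"
    and W :: "'a \<Rightarrow> 'a \<Rightarrow> real"
    and fs :: "nat \<Rightarrow> 'a \<Rightarrow> real"
  assumes "atomless_standard_prob_space M"
    and "\<And>n. graphon M (Ws n)"
    and "graphon M W"
    and "(\<lambda>n. cut_norm M (\<lambda>x y. Ws n x y - W x y)) \<longlonglongrightarrow> 0"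
    and "\<And>n. fractional_vertex_cover M (Ws n) (fs n) \<and> half_integral M (fs n)"
  shows "\<exists>f. fractional_vertex_cover M W f \<and> half_integral M f \<and>
           ereal (measure M (f -` {0} \<inter> space M))
              \<ge> liminf (\<lambda>n. ereal (measure M (fs n -` {0} \<inter> space M))) \<and>
           ereal (L1_norm M f) \<le> liminf (\<lambda>n. ereal (L1_norm M (fs n)))"
proof -
  note gs = assms(2) and g = assms(3) and cut = assms(4)
  have prob: "prob_space M" and sM: "sets M = sets borel"
    using assms(1) unfolding atomless_standard_prob_space_def by auto
  interpret prob_space M by (rule prob)
  have spM: "space M = UNIV" using sets_eq_imp_space_eq[OF sM] by simp
  interpret D: prob_space "M \<Otimes>\<^sub>M M" by (rule prob_space_pair[OF prob prob])
  have fvc: "fractional_vertex_cover M (Ws n) (fs n)" and hi: "half_integral M (fs n)" for n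
    using assms(5) by auto
  have fsm[measurable]: "fs n \<in> borel_measurable M" for n
    using fvc[of n] unfolding fractional_vertex_cover_def by auto
  obtain G0 :: "'a set set" where G0: "countable G0" "Int_stable G0" "UNIV \<in> G0" "sets borel = sigma_sets UNIV G0"
    by (rule countable_generator)
  have sG: "sets M = sigma_sets (space M) G0" using sM spM G0(4) by simp
  have GP: "G0 \<subseteq> Pow (space M)" by (simp add: spM)
  define g0 where "g0 = from_nat_into G0"
  have rg: "range g0 = G0" unfolding g0_def using G0(1,3) by (intro range_from_nat_into) auto
  obtain kU where kU: "g0 kU = UNIV" using G0(3) rg by (metis rangeE)
  define Z where "Z n = fs n -` {0} \<inter> space M" for n
  define K where "K n = fs n -` {0, 1/2} \<inter> space M" for n
  have Zs[measurable]: "Z n \<in> sets M" for n unfolding Z_def by measurable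
  have Ks[measurable]: "K n \<in> sets M" for n unfolding K_def by measurable
  define u where "u n = ereal (L1_norm M (fs n))" for n
  obtain \<sigma> :: "nat \<Rightarrow> nat" where \<sigma>: "strict_mono \<sigma>" "(u \<circ> \<sigma>) \<longlonglongrightarrow> liminf u"
    using liminf_subseq_lim[of u] by (elim exE conjE) (rule that)
  define X where "X k n = (if even k then measure M (Z (\<sigma> n) \<inter> g0 (k div 2))
                           else measure M (K (\<sigma> n) \<inter> g0 (k div 2)))" for k n
  have Xb: "\<bar>X k n\<bar> \<le> 1" for k n unfolding X_def by (simp add: prob_le_1)
  have "\<exists>r. strict_mono r \<and> (\<forall>k. convergent (\<lambda>n. X k (r n)))"
    by (rule diag_conv[of X]) (use Xb in auto)
  then obtain r where r: "strict_mono r" "\<And>k. convergent (\<lambda>n. X k (r n))" by blast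
  define \<psi> where "\<psi> = \<sigma> \<circ> r"
  have \<psi>: "strict_mono \<psi>" unfolding \<psi>_def using \<sigma>(1) r(1) by (rule strict_mono_o)
  have cZG: "convergent (\<lambda>n. measure M (Z (\<psi> n) \<inter> A))" if AG: "A \<in> G0" for A
  proof -
    obtain k where k: "A = g0 k" using AG rg by blast
    have "X (2 * k) (r n) = measure M (Z (\<psi> n) \<inter> A)" for n unfolding X_def \<psi>_def k by simp
    then show ?thesis using r(2)[of "2 * k"] by simp
  qed
  have cKG: "convergent (\<lambda>n. measure M (K (\<psi> n) \<inter> A))" if AG: "A \<in> G0" for A
  proof -
    obtain k where k: "A = g0 k" using AG rg by blast
    have "X (2 * k + 1) (r n) = measure M (K (\<psi> n) \<inter> A)" for n unfolding X_def \<psi>_def k by simp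
    then show ?thesis using r(2)[of "2 * k + 1"] by simp
  qed
  have cZS: "convergent (\<lambda>n. measure M (Z (\<psi> n)))" using cZG[OF G0(3)] by simp
  have cKS: "convergent (\<lambda>n. measure M (K (\<psi> n)))" using cKG[OF G0(3)] by simp
  have cZ: "convergent (\<lambda>n. measure M (Z (\<psi> n) \<inter> A))" if "A \<in> sets M" for A
    by (rule dyn_conv[of M G0 "\<lambda>n. Z (\<psi> n)", OF finite_measure_axioms sG G0(2) GP Zs cZG cZS that])
  have cK: "convergent (\<lambda>n. measure M (K (\<psi> n) \<inter> A))" if "A \<in> sets M" for A
    by (rule dyn_conv[of M G0 "\<lambda>n. K (\<psi> n)", OF finite_measure_axioms sG G0(2) GP Ks cKG cKS that])
  obtain p where pm[measurable]: "p \<in> borel_measurable M" and p01: "\<And>x. 0 \<le> p x" "\<And>x. p x \<le> 1"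
    and pc: "\<And>A. A \<in> sets M \<Longrightarrow> (\<lambda>n. measure M (Z (\<psi> n) \<inter> A)) \<longlonglongrightarrow> (\<integral>x. indicator A x * p x \<partial>M)"
    by (rule limit_density[of M "\<lambda>n. Z (\<psi> n)"], rule finite_measure_axioms, rule Zs, erule cZ, (rule that; assumption))
  obtain q where qm[measurable]: "q \<in> borel_measurable M" and q01: "\<And>x. 0 \<le> q x" "\<And>x. q x \<le> 1"
    and qc: "\<And>A. A \<in> sets M \<Longrightarrow> (\<lambda>n. measure M (K (\<psi> n) \<inter> A)) \<longlonglongrightarrow> (\<integral>x. indicator A x * q x \<partial>M)"
    by (rule limit_density[of M "\<lambda>n. K (\<psi> n)"], rule finite_measure_axioms, rule Ks, erule cK, (rule that; assumption))
  note Wm = graphon_meas[OF g]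
  have Wm1[measurable]: "(\<lambda>z. W (fst z) (snd z)) \<in> borel_measurable (M \<Otimes>\<^sub>M M)" by (rule Wm(1))
  have fs01: "fs n x \<in> {0, 1/2, 1}" for n x using hi[of n] spM unfolding half_integral_def by auto
  have vanish: "(\<integral>z. a (fst z) * b (snd z) * W (fst z) (snd z) \<partial>(M \<Otimes>\<^sub>M M)) = 0"
    if S: "\<And>n. S n \<in> sets M" and T: "\<And>n. T n \<in> sets M"
      and am[measurable]: "a \<in> borel_measurable M" and a01: "\<And>x. 0 \<le> a x" "\<And>x. a x \<le> 1"
      and bm[measurable]: "b \<in> borel_measurable M" and b01: "\<And>x. 0 \<le> b x" "\<And>x. b x \<le> 1"
      and ac: "\<And>A. A \<in> sets M \<Longrightarrow> (\<lambda>n. measure M (S (\<psi> n) \<inter> A)) \<longlonglongrightarrow> (\<integral>x. indicator A x * a x \<partial>M)"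
      and bc: "\<And>A. A \<in> sets M \<Longrightarrow> (\<lambda>n. measure M (T (\<psi> n) \<inter> A)) \<longlonglongrightarrow> (\<integral>x. indicator A x * b x \<partial>M)"
      and small: "\<And>n x y. x \<in> S n \<Longrightarrow> y \<in> T n \<Longrightarrow> fs n x + fs n y < 1"
    for S T a b
  proof -
    have l1: "(\<lambda>n. \<integral>z. indicator (S (\<psi> n) \<times> T (\<psi> n)) z * W (fst z) (snd z) \<partial>(M \<Otimes>\<^sub>M M))
           \<longlonglongrightarrow> (\<integral>z. a (fst z) * b (snd z) * W (fst z) (snd z) \<partial>(M \<Otimes>\<^sub>M M))"
      by (rule product_limit[OF prob _ _ am a01 bm b01 ac bc Wm(1) Wm(2)]) (use S T in auto)
    have "(\<lambda>n. \<integral>z. indicator (S n \<times> T n) z * W (fst z) (snd z) \<partial>(M \<Otimes>\<^sub>M M)) \<longlonglongrightarrow> 0"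
      by (rule zero_lim[OF prob gs g cut S T cover_AE[OF fvc gs small]])
    from LIMSEQ_subseq_LIMSEQ[OF this \<psi>]
    have l2: "(\<lambda>n. \<integral>z. indicator (S (\<psi> n) \<times> T (\<psi> n)) z * W (fst z) (snd z) \<partial>(M \<Otimes>\<^sub>M M)) \<longlonglongrightarrow> 0"
      by (simp add: o_def)
    show ?thesis using LIMSEQ_unique[OF l1 l2] .
  qed
  have AEvan: "AE z in M \<Otimes>\<^sub>M M. a (fst z) * b (snd z) * W (fst z) (snd z) = 0"
    if am[measurable]: "a \<in> borel_measurable M" and a01: "\<And>x. 0 \<le> a x" "\<And>x. a x \<le> 1"
      and bm[measurable]: "b \<in> borel_measurable M" and b01: "\<And>x. 0 \<le> b x" "\<And>x. b x \<le> 1"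
      and i0: "(\<integral>z. a (fst z) * b (snd z) * W (fst z) (snd z) \<partial>(M \<Otimes>\<^sub>M M)) = 0"
    for a b
  proof -
    have int: "integrable (M \<Otimes>\<^sub>M M) (\<lambda>z. a (fst z) * b (snd z) * W (fst z) (snd z))"
    proof (rule D.integrable_const_bound[where B=1])
      show "AE z in M \<Otimes>\<^sub>M M. norm (a (fst z) * b (snd z) * W (fst z) (snd z)) \<le> 1"
      proof (rule AE_I2)
        fix z
        have "a (fst z) * b (snd z) * W (fst z) (snd z) \<le> 1 * 1 * 1"
          using a01 b01 Wm(2) by (intro mult_mono) auto
        moreover have "0 \<le> a (fst z) * b (snd z) * W (fst z) (snd z)" using a01 b01 Wm(2) by simp
        ultimately show "norm (a (fst z) * b (snd z) * W (fst z) (snd z)) \<le> 1" by simp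
      qed
    qed measurable
    have "AE z in M \<Otimes>\<^sub>M M. 0 \<le> a (fst z) * b (snd z) * W (fst z) (snd z)"
      using a01 b01 Wm(2) by simp
    then show ?thesis using integral_nonneg_eq_0_iff_AE[OF int] i0 by simp
  qed
  have small_ZK: "fs n x + fs n y < 1" if "x \<in> Z n" "y \<in> K n" for n x y
    using that unfolding Z_def K_def by auto
  have small_ZZ: "fs n x + fs n y < 1" if "x \<in> Z n" "y \<in> Z n" for n x y
    using that unfolding Z_def by auto
  have small_KZ: "fs n x + fs n y < 1" if "x \<in> K n" "y \<in> Z n" for n x y
    using that unfolding Z_def K_def by auto
  have AE1: "AE z in M \<Otimes>\<^sub>M M. p (fst z) * q (snd z) * W (fst z) (snd z) = 0"
    by (rule AEvan[OF pm p01 qm q01 vanish[OF Zs Ks pm p01 qm q01 pc qc small_ZK]])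
  have AE2: "AE z in M \<Otimes>\<^sub>M M. p (fst z) * p (snd z) * W (fst z) (snd z) = 0"
    by (rule AEvan[OF pm p01 pm p01 vanish[OF Zs Zs pm p01 pm p01 pc pc small_ZZ]])
  have AE3: "AE z in M \<Otimes>\<^sub>M M. q (fst z) * p (snd z) * W (fst z) (snd z) = 0"
    by (rule AEvan[OF qm q01 pm p01 vanish[OF Ks Zs qm q01 pm p01 qc pc small_KZ]])
  define f where "f x = (if 0 < p x then 0 else if 0 < q x then 1/2 else (1::real))" for x
  have fm[measurable]: "f \<in> borel_measurable M" unfolding f_def by measurable
  have cover: "fractional_vertex_cover M W f"
    unfolding fractional_vertex_cover_def
  proof (intro conjI)
    show "f \<in> borel_measurable M" by (rule fm)
    show "\<forall>x\<in>space M. 0 \<le> f x \<and> f x \<le> 1" by (auto simp: f_def)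
    show "AE z in M \<Otimes>\<^sub>M M. 0 < W (fst z) (snd z) \<longrightarrow> 1 \<le> f (fst z) + f (snd z)"
      using AE1 AE2 AE3
    proof eventually_elim
      case (elim z)
      show ?case
      proof
        assume Wp: "0 < W (fst z) (snd z)"
        have e1: "p (fst z) = 0 \<or> q (snd z) = 0" using elim(1) Wp by simp
        have e2: "p (fst z) = 0 \<or> p (snd z) = 0" using elim(2) Wp by simp
        have e3: "q (fst z) = 0 \<or> p (snd z) = 0" using elim(3) Wp by simp
        show "1 \<le> f (fst z) + f (snd z)"
          using e1 e2 e3 p01[of "fst z"] p01[of "snd z"] q01[of "fst z"] q01[of "snd z"]
          unfolding f_def by (auto simp: less_le)
      qed
    qed
  qed
  have half: "half_integral M f" unfolding half_integral_def f_def by auto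
  have intp: "(\<integral>x. indicator (space M) x * p x \<partial>M) = (\<integral>x. p x \<partial>M)"
    by (rule Bochner_Integration.integral_cong) auto
  have intq: "(\<integral>x. indicator (space M) x * q x \<partial>M) = (\<integral>x. q x \<partial>M)"
    by (rule Bochner_Integration.integral_cong) auto
  have limZ: "(\<lambda>n. measure M (Z (\<psi> n))) \<longlonglongrightarrow> (\<integral>x. p x \<partial>M)"
    using pc[OF sets.top] intp by (simp add: Int_absorb2 Z_def)
  have limK: "(\<lambda>n. measure M (K (\<psi> n))) \<longlonglongrightarrow> (\<integral>x. q x \<partial>M)"
    using qc[OF sets.top] intq by (simp add: Int_absorb2 K_def)
  have ip: "integrable M p" by (rule integrable_const_bound[where B=1]) (use p01 in auto)
  have iq: "integrable M q" by (rule integrable_const_bound[where B=1]) (use q01 in auto)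
  have zeroset: "f -` {0} \<inter> space M = {x\<in>space M. 0 < p x}" by (auto simp: f_def split: if_splits)
  have a_le: "(\<integral>x. p x \<partial>M) \<le> measure M (f -` {0} \<inter> space M)"
  proof -
    have "(\<integral>x. p x \<partial>M) \<le> (\<integral>x. indicator {x\<in>space M. 0 < p x} x \<partial>M)"
    proof (rule integral_mono)
      have "{x\<in>space M. 0 < p x} \<in> sets M" by measurable
      then show "integrable M (indicator {x\<in>space M. 0 < p x} :: 'a \<Rightarrow> real)"
        by (intro integrable_real_indicator) (auto simp: less_top[symmetric])
      show "p x \<le> indicator {x\<in>space M. 0 < p x} x" if "x \<in> space M" for x
        using p01[of x] that by (auto simp: indicator_def less_le)
    qed (rule ip)
    also have "\<dots> = measure M {x\<in>space M. 0 < p x}" by (simp add: Int_absorb2)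
    finally show ?thesis unfolding zeroset .
  qed
  have partA: "liminf (\<lambda>n. ereal (measure M (fs n -` {0} \<inter> space M))) \<le> ereal (measure M (f -` {0} \<inter> space M))"
  proof -
    let ?v = "\<lambda>n. ereal (measure M (fs n -` {0} \<inter> space M))"
    have "liminf ?v \<le> liminf (?v \<circ> \<psi>)" by (rule liminf_subseq_mono[OF \<psi>])
    also have "(?v \<circ> \<psi>) \<longlonglongrightarrow> ereal (\<integral>x. p x \<partial>M)"
      using limZ unfolding Z_def o_def by (simp add: tendsto_ereal)
    then have "liminf (?v \<circ> \<psi>) = ereal (\<integral>x. p x \<partial>M)" by (rule lim_imp_Liminf[rotated]) simp
    also have "\<dots> \<le> ereal (measure M (f -` {0} \<inter> space M))" using a_le by simp
    finally show ?thesis .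
  qed
  define l where "l = 1 - (\<integral>x. p x \<partial>M) / 2 - (\<integral>x. q x \<partial>M) / 2"
  have L1fs: "L1_norm M (fs n) = 1 - measure M (Z n) / 2 - measure M (K n) / 2" for n
    unfolding Z_def K_def by (rule L1_half[OF prob fsm hi])
  have limL1: "(\<lambda>n. L1_norm M (fs (\<psi> n))) \<longlonglongrightarrow> l"
    unfolding L1fs l_def by (intro tendsto_intros limZ limK) simp_all
  have "(u \<circ> \<psi>) \<longlonglongrightarrow> liminf u"
    using LIMSEQ_subseq_LIMSEQ[OF \<sigma>(2) r(1)] unfolding \<psi>_def by (simp add: o_assoc)
  moreover have "(u \<circ> \<psi>) \<longlonglongrightarrow> ereal l" using limL1 unfolding u_def o_def by (simp add: tendsto_ereal)
  ultimately have liml: "liminf u = ereal l" by (rule LIMSEQ_unique)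
  have L1f: "L1_norm M f \<le> l"
  proof -
    have "L1_norm M f = (\<integral>x. f x \<partial>M)" unfolding L1_norm_def
      by (rule Bochner_Integration.integral_cong) (auto simp: f_def)
    also have "\<dots> \<le> (\<integral>x. 1 - p x / 2 - q x / 2 \<partial>M)"
    proof (rule integral_mono)
      show "integrable M f" by (rule integrable_const_bound[where B=1]) (auto simp: f_def)
      show "integrable M (\<lambda>x. 1 - p x / 2 - q x / 2)" using ip iq by simp
      show "f x \<le> 1 - p x / 2 - q x / 2" for x
        using p01[of x] q01[of x] unfolding f_def by (auto simp: not_less)
    qed
    also have "\<dots> = l" unfolding l_def using ip iq by (simp add: prob_space)
    finally show ?thesis .
  qed
  have partB: "ereal (L1_norm M f) \<le> liminf (\<lambda>n. ereal (L1_norm M (fs n)))"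
    using L1f liml unfolding u_def by simp
  show ?thesis using cover half partA partB by blast
qed


end
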